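(* For a prime $p$ and integers $k$ and $h\ge1$, let $U(p;k,h)$ denote the number of $u\in\{0,\ldots,p-1\}$ such that $q_p(u)\equiv z\pmod p$ for some integer $z\in[k+1,k+h]$. Then for any integers $k$ and $h\ge 1$ we have $U(p;k,h)\le h^{1/2}p^{1/2+o(1)}$ as $p\to\infty$.
   Context: For a prime $p$ and an integer $u$ with $\gcd(u,p)=1$, the Fermat quotient $q_p(u)$ is the unique integer with $q_p(u)\equiv (u^{p-1}-1)/p \pmod p$ and $0\le q_p(u)\le p-1$; also $q_p(kp)=0$ for all $k\in\mathbb{Z}$. *)

theory Defs
  imports Complex_Main "HOL-Number_Theory.Number_Theory"
begin

text \<open>Fermat quotient q_p(u): for p not dividing u, the residue in [0,p-1] of
  (u^(p-1) - 1)/p (an integer by Fermat's little theorem); q_p(kp) = 0.\<close>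
definition fermat_quotient :: "nat \<Rightarrow> int \<Rightarrow> int" where
  "fermat_quotient p u =
     (if int p dvd u then 0 else ((u ^ (p - 1) - 1) div int p) mod int p)"

definition U_count :: "nat \<Rightarrow> int \<Rightarrow> int \<Rightarrow> nat" where
  "U_count p k h = card {u \<in> {0..<int p}.
      \<exists>z. k + 1 \<le> z \<and> z \<le> k + h \<and> [fermat_quotient p u = z] (mod int p)}"

end

theory Submission
  imports Defs
begin

lemma divisors_split:
  fixes q m :: nat
  assumes q: "prime q" and m: "m > 0"
  shows "card {d. d dvd q^a*m} \<le> (a+1) * card {d. d dvd m}"
proof -
  have "{d. d dvd q^a*m} \<subseteq> (\<lambda>(j,e). q^j*e) ` ({0..a} \<times> {d. d dvd m})"
  proof
    fix d assume "d \<in> {d. d dvd q^a*m}"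
    then obtain b c where bc: "d = b*c" "b dvd q^a" "c dvd m"
      using division_decomp by blast
    then obtain i where "i \<le> a" "b = q^i" using divides_primepow_nat[OF q] by blast
    thus "d \<in> (\<lambda>(j,e). q^j*e) ` ({0..a} \<times> {d. d dvd m})"
      using bc by (auto intro!: image_eqI[of _ _ "(i,c)"])
  qed
  hence "card {d. d dvd q^a*m} \<le> card ((\<lambda>(j,e). q^j*e) ` ({0..a} \<times> {d. d dvd m}))"
    by (intro card_mono) (auto simp: m)
  also have "\<dots> \<le> card ({0..a} \<times> {d. d dvd m})" by (rule card_image_le) (auto simp: m)
  also have "\<dots> = (a+1) * card {d. d dvd m}" by (simp add: card_cartesian_product)
  finally show ?thesis .
qed

lemma divisor_bound_aux:
  fixes \<delta> M :: real and K :: nat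
  assumes d: "\<delta> > 0" and M: "M \<ge> 1"
    and K: "\<And>q::nat. q \<ge> K \<Longrightarrow> real q powr \<delta> \<ge> 2"
    and Mb: "\<And>a::nat. real a + 1 \<le> M * 2 powr (real a * \<delta>)"
  shows "n > 0 \<Longrightarrow> real (card {d. d dvd n}) \<le> M ^ card (prime_factors n \<inter> {..<K}) * real n powr \<delta>"
proof (induction n rule: less_induct)
  case (less n)
  show ?case
  proof (cases "n = 1")
    case True
    then show ?thesis by simp
  next
    case False
    then obtain q where q: "prime q" "q dvd n" using prime_factor_nat by blast
    define a where "a = multiplicity q n"
    have nq: "n \<noteq> 0" "\<not> is_unit q" using less.prems q not_prime_unit by auto
    from multiplicity_decompose'[OF nq] obtain m where nm: "n = q^a * m" "\<not> q dvd m"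
      unfolding a_def by blast
    have a1: "a \<ge> 1" unfolding a_def using q less.prems
      by (simp add: prime_multiplicity_gt_zero_iff Suc_le_eq)
    have m0: "m > 0" using nm less.prems by (metis gr0I mult_0_right)
    have q2: "q \<ge> 2" using q prime_ge_2_nat by auto
    have "1 < q^a" using q2 a1 by (intro one_less_power) auto
    hence mn: "m < n" using nm m0 by simp
    have IH: "real (card {d. d dvd m}) \<le> M ^ card (prime_factors m \<inter> {..<K}) * real m powr \<delta>"
      using less.IH[OF mn m0] .
    have pfsub: "prime_factors m \<subseteq> prime_factors n"
      using nm m0 less.prems by (auto intro: prime_factors_dvd dvd_mult_left simp: in_prime_factors_iff)
    have qn: "q \<in> prime_factors n" using q less.prems by (simp add: in_prime_factors_iff)
    have qm: "q \<notin> prime_factors m" using nm by (simp add: in_prime_factors_iff)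
    have fin: "finite (prime_factors n \<inter> {..<K})" by simp
    have cd: "real (card {d. d dvd n}) \<le> (real a + 1) * real (card {d. d dvd m})"
    proof -
      have "card {d. d dvd n} \<le> (a+1) * card {d. d dvd m}" using divisors_split[OF q(1) m0, of a] nm(1) by simp
      hence "real (card {d. d dvd n}) \<le> real ((a+1) * card {d. d dvd m})" by (simp only: of_nat_le_iff)
      thus ?thesis by (simp add: algebra_simps)
    qed
    have npow: "real n powr \<delta> = real q powr (real a * \<delta>) * real m powr \<delta>"
      using nm q2 by (simp add: powr_mult powr_realpow[symmetric] powr_powr mult.commute)
    have Mpos: "M > 0" using M by simp
    have qpos: "real q powr (real a * \<delta>) > 0" using q2 by simp
    show ?thesis
    proof (cases "q < K")
      case True
      have cardle: "card (prime_factors m \<inter> {..<K}) + 1 \<le> card (prime_factors n \<inter> {..<K})"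
      proof -
        have "insert q (prime_factors m \<inter> {..<K}) \<subseteq> prime_factors n \<inter> {..<K}"
          using pfsub qn True by auto
        from card_mono[OF fin this] qm show ?thesis by simp
      qed
      have "real a + 1 \<le> M * 2 powr (real a * \<delta>)" by (rule Mb)
      also have "\<dots> \<le> M * real q powr (real a * \<delta>)"
        using q2 d Mpos by (intro mult_left_mono powr_mono2) auto
      finally have aq: "real a + 1 \<le> M * real q powr (real a * \<delta>)" .
      have "real (card {d. d dvd n}) \<le> (M * real q powr (real a * \<delta>)) * (M ^ card (prime_factors m \<inter> {..<K}) * real m powr \<delta>)"
        using cd mult_mono[OF aq IH] Mpos qpos by (smt (verit) of_nat_0_le_iff mult_pos_pos)
      also have "\<dots> = M ^ (card (prime_factors m \<inter> {..<K}) + 1) * real n powr \<delta>"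
        using npow by (simp add: algebra_simps)
      also have "\<dots> \<le> M ^ card (prime_factors n \<inter> {..<K}) * real n powr \<delta>"
        using cardle M by (intro mult_right_mono power_increasing) auto
      finally show ?thesis .
    next
      case False
      have "real a + 1 \<le> 2 ^ a"
        by (induction a) auto
      also have "\<dots> \<le> (real q powr \<delta>) ^ a" using K[of q] False by (intro power_mono) auto
      also have "\<dots> = real q powr (real a * \<delta>)" using q2 by (simp add: powr_power)
      finally have aq: "real a + 1 \<le> real q powr (real a * \<delta>)" .
      have cardle: "card (prime_factors m \<inter> {..<K}) \<le> card (prime_factors n \<inter> {..<K})"
        using pfsub by (intro card_mono[OF fin]) auto
      have "real (card {d. d dvd n}) \<le> real q powr (real a * \<delta>) * (M ^ card (prime_factors m \<inter> {..<K}) * real m powr \<delta>)"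
        using cd mult_mono[OF aq IH] Mpos qpos by (smt (verit) of_nat_0_le_iff mult_pos_pos)
      also have "\<dots> = M ^ (card (prime_factors m \<inter> {..<K})) * real n powr \<delta>"
        using npow by (simp add: algebra_simps)
      also have "\<dots> \<le> M ^ card (prime_factors n \<inter> {..<K}) * real n powr \<delta>"
        using cardle M by (intro mult_right_mono power_increasing) auto
      finally show ?thesis .
    qed
  qed
qed

lemma divisor_bound:
  fixes \<delta> :: real
  assumes d: "\<delta> > 0"
  shows "\<exists>C\<ge>1. \<forall>n::nat. n > 0 \<longrightarrow> real (card {d. d dvd n}) \<le> C * real n powr \<delta>"
proof -
  define c where "c = \<delta> * ln 2"
  have c: "c > 0" using d by (simp add: c_def)
  define M where "M = 1 + 1 / c"
  define K where "K = nat \<lceil>2 powr (1/\<delta>)\<rceil>"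
  have M1: "M \<ge> 1" using c by (simp add: M_def)
  have K: "real q powr \<delta> \<ge> 2" if "q \<ge> K" for q :: nat
  proof -
    have "2 powr (1/\<delta>) \<le> real q" using that unfolding K_def by linarith
    hence "(2 powr (1/\<delta>)) powr \<delta> \<le> real q powr \<delta>" using d by (intro powr_mono2) auto
    thus ?thesis using d by (simp add: powr_powr)
  qed
  have Mb: "real a + 1 \<le> M * 2 powr (real a * \<delta>)" for a :: nat
  proof -
    have "2 powr (real a * \<delta>) = exp (real a * c)" by (simp add: powr_def c_def)
    also have "\<dots> \<ge> 1 + real a * c" by (rule exp_ge_add_one_self)
    finally have e: "1 + real a * c \<le> 2 powr (real a * \<delta>)" .
    have "real a + 1 \<le> M * (1 + real a * c)"
      using c by (simp add: M_def field_simps)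
    also have "\<dots> \<le> M * 2 powr (real a * \<delta>)" using e M1 by (intro mult_left_mono) auto
    finally show ?thesis .
  qed
  show ?thesis
  proof (intro exI[of _ "M ^ K"] conjI allI impI)
    show "1 \<le> M ^ K" using M1 by simp
    fix n :: nat assume n: "n > 0"
    have "real (card {d. d dvd n}) \<le> M ^ card (prime_factors n \<inter> {..<K}) * real n powr \<delta>"
      by (rule divisor_bound_aux[OF d M1 K Mb n])
    also have "\<dots> \<le> M ^ K * real n powr \<delta>"
    proof -
      have "card (prime_factors n \<inter> {..<K}) \<le> card {..<K}" by (intro card_mono) auto
      thus ?thesis using M1 by (intro mult_right_mono power_increasing) auto
    qed
    finally show "real (card {d. d dvd n}) \<le> M ^ K * real n powr \<delta>" .
  qed
qed

lemma fermat_int: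
  assumes p: "prime p" and u: "\<not> int p dvd u"
  shows "int p dvd u^(p-1) - 1"
proof -
  define r where "r = nat (u mod int p)"
  have p0: "int p > 0" using p prime_gt_0_nat by simp
  have ur: "[u = int r] (mod int p)" using p0 unfolding r_def cong_def by simp
  have "\<not> p dvd r"
  proof
    assume "p dvd r"
    hence "int p dvd int r" by simp
    hence "int p dvd u" using cong_dvd_iff[OF ur] by simp
    with u show False by simp
  qed
  hence "[r^(p-1) = 1] (mod p)" using fermat_theorem[OF p] by blast
  hence "[int (r^(p-1)) = int 1] (mod int p)" by (simp only: cong_int_iff)
  hence "[int r^(p-1) = 1] (mod int p)" by simp
  moreover have "[u^(p-1) = int r^(p-1)] (mod int p)" using ur by (rule cong_pow)
  ultimately have "[u^(p-1) = 1] (mod int p)" by (metis cong_trans)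
  thus ?thesis by (simp add: cong_iff_dvd_diff)
qed

lemma fq_cong:
  assumes p: "prime p" and u: "\<not> int p dvd u"
  shows "[u^(p-1) = 1 + int p * fermat_quotient p u] (mod (int p)^2)"
proof -
  obtain t where t: "u^(p-1) - 1 = int p * t" using fermat_int[OF p u] by blast
  have p0: "int p > 0" using p prime_gt_0_nat by simp
  have "(u^(p-1) - 1) div int p = t" unfolding t using p0 by simp
  hence fq: "fermat_quotient p u = t mod int p"
    using u unfolding fermat_quotient_def by simp
  have "int p * (t mod int p) = (int p * t) mod (int p * int p)" by (rule mult_mod_right)
  hence "int p * fermat_quotient p u = (u^(p-1) - 1) mod ((int p)^2)"
    unfolding fq t power2_eq_square .
  hence e: "1 + int p * fermat_quotient p u = 1 + (u^(p-1) - 1) mod ((int p)^2)" by simp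
  have "[1 + (u^(p-1) - 1) mod ((int p)^2) = 1 + (u^(p-1) - 1)] (mod (int p)^2)"
    unfolding cong_def by (rule mod_add_right_eq)
  hence "[1 + int p * fermat_quotient p u = u^(p-1)] (mod (int p)^2)" unfolding e by simp
  thus ?thesis by (rule cong_sym)
qed

lemma cong_lift:
  fixes a z m :: int
  assumes "[a = z] (mod m)"
  shows "[1 + m * a = 1 + m * z] (mod m^2)"
proof -
  obtain s where "a - z = m * s" using assms by (auto simp: cong_iff_dvd_diff dvd_def)
  hence "(1 + m*a) - (1 + m*z) = m^2 * s" by (simp add: algebra_simps power2_eq_square)
  thus ?thesis by (simp add: cong_iff_dvd_diff)
qed

lemma cong_prod:
  fixes x y a b m :: int
  assumes "[x^n = 1 + m*a] (mod m^2)" "[y^n = 1 + m*b] (mod m^2)"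
  shows "[(x*y)^n = 1 + m*(a+b)] (mod m^2)"
proof -
  have "[(x*y)^n = (1 + m*a) * (1 + m*b)] (mod m^2)"
    unfolding power_mult_distrib using assms by (rule cong_mult)
  moreover have "[(1 + m*a) * (1 + m*b) = 1 + m*(a+b)] (mod m^2)"
  proof -
    have "(1 + m*a) * (1 + m*b) - (1 + m*(a+b)) = m^2 * (a*b)" by (simp add: algebra_simps power2_eq_square)
    thus ?thesis by (simp add: cong_iff_dvd_diff)
  qed
  ultimately show ?thesis by (rule cong_trans)
qed

lemma cong_binom:
  fixes x m t :: int
  shows "[(x + m*t)^(Suc n) = x^(Suc n) + int (Suc n) * x^n * m * t] (mod m^2)"
proof (induction n)
  case 0
  then show ?case by simp
next
  case (Suc n)
  have "[(x + m*t)^(Suc (Suc n)) = (x^(Suc n) + int (Suc n) * x^n * m * t) * (x + m*t)] (mod m^2)"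
    using cong_mult[OF Suc.IH cong_refl[of "x + m*t"]] by (simp add: mult.commute)
  moreover have "[(x^(Suc n) + int (Suc n) * x^n * m * t) * (x + m*t) = x^(Suc (Suc n)) + int (Suc (Suc n)) * x^(Suc n) * m * t] (mod m^2)"
  proof -
    have "(x^(Suc n) + int (Suc n) * x^n * m * t) * (x + m*t) - (x^(Suc (Suc n)) + int (Suc (Suc n)) * x^(Suc n) * m * t) = m^2 * (int (Suc n) * x^n * t * t)"
      by (simp add: algebra_simps power2_eq_square)
    thus ?thesis by (simp add: cong_iff_dvd_diff)
  qed
  ultimately show ?case by (rule cong_trans)
qed

lemma W_card:
  assumes p: "prime p"
  shows "card {w \<in> {1..<(int p)^2}. [w^(p-1) = 1 + int p * z] (mod (int p)^2)} \<le> p"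
proof -
  define P where "P = int p"
  define W where "W = {w \<in> {1..<P^2}. [w^(p-1) = 1 + P * z] (mod P^2)}"
  have p2: "p \<ge> 2" using p prime_ge_2_nat by simp
  have P1: "P > 1" using p2 by (simp add: P_def)
  have Pp: "prime P" using p by (simp add: P_def)
  have nd: "\<not> P dvd w" if "w \<in> W" for w
  proof
    assume "P dvd w"
    moreover have "w dvd w^(p-1)" using p2 by (intro dvd_power) auto
    ultimately have "P dvd w^(p-1)" by (rule dvd_trans)
    moreover have "[w^(p-1) = 1 + P*z] (mod P)"
    proof -
      have "[w^(p-1) = 1 + P*z] (mod P^2)" using that unfolding W_def by simp
      moreover have "P dvd P^2" by simp
      ultimately show ?thesis by (rule cong_dvd_modulus)
    qed
    ultimately have "P dvd 1 + P*z" using cong_dvd_iff by metis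
    hence "P dvd 1" by (simp add: dvd_add_left_iff)
    thus False using P1 by simp
  qed
  have "inj_on (\<lambda>w. w mod P) W"
  proof
    fix w1 w2 assume w1: "w1 \<in> W" and w2: "w2 \<in> W" and eq: "w1 mod P = w2 mod P"
    have "P dvd w1 - w2" using eq by (simp add: mod_eq_dvd_iff)
    then obtain t where "w1 - w2 = P * t" by (auto simp: dvd_def)
    hence t: "w1 = w2 + P * t" by simp
    have "[w1^(p-1) = w2^(p-1) + int (p-1) * w2^(p-2) * P * t] (mod P^2)"
      using cong_binom[of w2 P t "p-2"] p2 t by (simp add: Suc_diff_Suc numeral_2_eq_2)
    moreover have "[w1^(p-1) = w2^(p-1)] (mod P^2)"
    proof -
      have a: "[w1^(p-1) = 1 + P*z] (mod P^2)" using w1 unfolding W_def by simp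
      have b: "[w2^(p-1) = 1 + P*z] (mod P^2)" using w2 unfolding W_def by simp
      show ?thesis using cong_trans[OF a cong_sym[OF b]] .
    qed
    ultimately have "[w2^(p-1) + int (p-1) * w2^(p-2) * P * t = w2^(p-1) + 0] (mod P^2)"
      by (metis add.right_neutral cong_sym cong_trans)
    hence "[int (p-1) * w2^(p-2) * P * t = 0] (mod P^2)"
      by (simp add: cong_iff_dvd_diff)
    hence "P * P dvd P * (int (p-1) * w2^(p-2) * t)"
      by (simp add: cong_0_iff power2_eq_square algebra_simps)
    hence "P dvd int (p-1) * w2^(p-2) * t" using P1 by simp
    moreover have "\<not> P dvd int (p-1)"
    proof
      assume "P dvd int (p-1)"
      hence "P \<le> int (p-1)" using p2 by (intro zdvd_imp_le) auto
      thus False using p2 by (simp add: P_def)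
    qed
    moreover have "\<not> P dvd w2^(p-2)" using nd[OF w2] Pp prime_dvd_power by blast
    ultimately have "P dvd t" using Pp by (simp add: prime_dvd_mult_iff)
    hence "P^2 dvd w1 - w2" using t by (simp add: power2_eq_square)
    moreover have "\<bar>w1 - w2\<bar> < P^2"
    proof -
      have "1 \<le> w1" "w1 < P^2" "1 \<le> w2" "w2 < P^2" using w1 w2 unfolding W_def by auto
      thus ?thesis by linarith
    qed
    ultimately show "w1 = w2"
    proof (cases "w1 - w2 = 0")
      case False
      assume d: "P^2 dvd w1 - w2" "\<bar>w1 - w2\<bar> < P^2"
      have "\<bar>P^2\<bar> \<le> \<bar>w1 - w2\<bar>" using dvd_imp_le_int[OF False d(1)] .
      with d(2) show ?thesis by simp
    qed simp
  qed
  hence "card W = card ((\<lambda>w. w mod P) ` W)" by (simp add: card_image)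
  also have "\<dots> \<le> card {0..<P}"
    by (intro card_mono) (use P1 in auto)
  also have "\<dots> = p" by (simp add: P_def)
  finally show ?thesis unfolding W_def P_def .
qed

lemma pair_count:
  fixes p :: nat and k h :: int and C \<delta> :: real
  assumes p: "prime p" and h: "h \<ge> 1" and C: "C \<ge> 0" and d: "\<delta> > 0"
    and DB: "\<forall>n::nat. n > 0 \<longrightarrow> real (card {d. d dvd n}) \<le> C * real n powr \<delta>"
  shows "real (card {u \<in> {1..<int p}. \<exists>z. k + 1 \<le> z \<and> z \<le> k + h \<and> [fermat_quotient p u = z] (mod int p)})^2
     \<le> real_of_int (2*h - 1) * real p * (C * real (p^2) powr \<delta>)"
proof -
  define S1 where "S1 = {u \<in> {1..<int p}. \<exists>z. k + 1 \<le> z \<and> z \<le> k + h \<and> [fermat_quotient p u = z] (mod int p)}"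
  define P where "P = int p"
  define W where "W z = {w \<in> {1..<P^2}. [w^(p-1) = 1 + P*z] (mod P^2)}" for z
  define Z where "Z = {2*k+2..2*k+2*h}"
  define WW where "WW = (\<Union>z\<in>Z. W z)"
  define F where "F w = {x \<in> S1 \<times> S1. fst x * snd x = w}" for w
  define Cb where "Cb = C * real (p^2) powr \<delta>"
  have p2: "p \<ge> 2" using p prime_ge_2_nat by simp
  have P1: "P > 1" using p2 by (simp add: P_def)
  have finS1: "finite S1" unfolding S1_def by (rule finite_subset[of _ "{1..<int p}"]) auto
  have finW: "finite (W z)" for z unfolding W_def by (rule finite_subset[of _ "{1..<P^2}"]) auto
  have finZ: "finite Z" unfolding Z_def by simp
  have finWW: "finite WW" unfolding WW_def using finZ finW by blast
  have Sbound: "u \<in> S1 \<Longrightarrow> 1 \<le> u \<and> u < P \<and> \<not> P dvd u" for u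
  proof -
    assume u: "u \<in> S1"
    hence u1: "1 \<le> u" "u < P" unfolding S1_def P_def by auto
    moreover have "\<not> P dvd u"
    proof
      assume "P dvd u"
      hence "P \<le> u" using u1 by (intro zdvd_imp_le) auto
      thus False using u1 by simp
    qed
    ultimately show ?thesis by simp
  qed
  have Scong: "u \<in> S1 \<Longrightarrow> \<exists>z. k + 1 \<le> z \<and> z \<le> k + h \<and> [u^(p-1) = 1 + P*z] (mod P^2)" for u
  proof -
    assume u: "u \<in> S1"
    then obtain z where z: "k + 1 \<le> z" "z \<le> k + h" "[fermat_quotient p u = z] (mod P)"
      unfolding S1_def P_def by auto
    have "[u^(p-1) = 1 + P * fermat_quotient p u] (mod P^2)"
      using fq_cong[OF p] Sbound[OF u] unfolding P_def by blast
    moreover have "[1 + P * fermat_quotient p u = 1 + P * z] (mod P^2)"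
      using z(3) by (rule cong_lift)
    ultimately have "[u^(p-1) = 1 + P*z] (mod P^2)" by (rule cong_trans)
    with z show ?thesis by blast
  qed
  have cover: "S1 \<times> S1 \<subseteq> (\<Union>w\<in>WW. F w)"
  proof
    fix x assume "x \<in> S1 \<times> S1"
    then obtain u v where x: "x = (u,v)" and u: "u \<in> S1" and v: "v \<in> S1" by auto
    obtain z1 where z1: "k + 1 \<le> z1" "z1 \<le> k + h" "[u^(p-1) = 1 + P*z1] (mod P^2)"
      using Scong[OF u] by blast
    obtain z2 where z2: "k + 1 \<le> z2" "z2 \<le> k + h" "[v^(p-1) = 1 + P*z2] (mod P^2)"
      using Scong[OF v] by blast
    have cw: "[(u*v)^(p-1) = 1 + P*(z1+z2)] (mod P^2)" using cong_prod[OF z1(3) z2(3)] .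
    have b1: "1 \<le> u" "u < P" using Sbound[OF u] by auto
    have b2: "1 \<le> v" "v < P" using Sbound[OF v] by auto
    have uv1: "1 \<le> u*v" using b1 b2 mult_mono[of 1 u 1 v] by simp
    have uv2: "u*v < P^2" using b1 b2 unfolding power2_eq_square by (intro mult_strict_mono) auto
    have "z1 + z2 \<in> Z" using z1 z2 unfolding Z_def by auto
    moreover have "u*v \<in> W (z1+z2)" unfolding W_def using uv1 uv2 cw by auto
    ultimately have "u*v \<in> WW" unfolding WW_def by blast
    moreover have "(u,v) \<in> F (u*v)" unfolding F_def using u v by auto
    ultimately show "x \<in> (\<Union>w\<in>WW. F w)" unfolding x by blast
  qed
  have fib: "real (card (F w)) \<le> Cb" if w: "w \<in> WW" for w
  proof -
    have w1: "1 \<le> w" "w < P^2" using w unfolding WW_def W_def by auto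
    have "inj_on (\<lambda>x. nat (fst x)) (F w)"
    proof (rule inj_onI)
      fix x y assume x: "x \<in> F w" and y: "y \<in> F w" and e: "nat (fst x) = nat (fst y)"
      have x1: "fst x \<ge> 1" "snd x \<ge> 1" "fst x * snd x = w" using x Sbound unfolding F_def by auto
      have y1: "fst y \<ge> 1" "snd y \<ge> 1" "fst y * snd y = w" using y Sbound unfolding F_def by auto
      have "fst x = fst y" using e x1 y1 by simp
      moreover hence "snd x = snd y" using x1 y1 by (metis mult_cancel_left not_one_le_zero)
      ultimately show "x = y" by (simp add: prod_eq_iff)
    qed
    moreover have "(\<lambda>x. nat (fst x)) ` F w \<subseteq> {d. d dvd nat w}"
    proof clarify
      fix a b assume ab: "(a,b) \<in> F w"
      have "a \<ge> 1" "b \<ge> 1" "a * b = w" using ab Sbound unfolding F_def by auto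
      hence "nat w = nat a * nat b" using nat_mult_distrib[of a b] by simp
      thus "nat (fst (a,b)) dvd nat w" by simp
    qed
    moreover have "finite {d. d dvd nat w}" using w1 by simp
    ultimately have "card (F w) \<le> card {d. d dvd nat w}" by (rule card_inj_on_le)
    hence "real (card (F w)) \<le> real (card {d. d dvd nat w})" by simp
    also have "\<dots> \<le> C * real (nat w) powr \<delta>" using DB w1 by (simp del: of_nat_nat)
    also have "\<dots> \<le> C * real (p^2) powr \<delta>"
    proof -
      have "nat w \<le> p^2" using w1 unfolding P_def by (simp add: nat_le_iff)
      hence "real (nat w) \<le> real (p^2)" by (simp only: of_nat_le_iff)
      thus ?thesis using C d by (intro mult_left_mono powr_mono2) auto
    qed
    finally show ?thesis unfolding Cb_def .
  qed
  have "card (S1 \<times> S1) \<le> card (\<Union>w\<in>WW. F w)"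
    using cover finWW F_def finS1 by (intro card_mono) (auto simp: F_def)
  also have "\<dots> \<le> (\<Sum>w\<in>WW. card (F w))" using finWW by (rule card_UN_le)
  finally have "real (card (S1 \<times> S1)) \<le> real (\<Sum>w\<in>WW. card (F w))" by (simp only: of_nat_le_iff)
  also have "\<dots> = (\<Sum>w\<in>WW. real (card (F w)))" by simp
  also have "\<dots> \<le> (\<Sum>w\<in>WW. Cb)" using fib by (intro sum_mono) auto
  also have "\<dots> = real (card WW) * Cb" by simp
  also have "\<dots> \<le> real (nat (2*h-1) * p) * Cb"
  proof -
    have "card WW \<le> (\<Sum>z\<in>Z. card (W z))" unfolding WW_def using finZ by (rule card_UN_le)
    also have "\<dots> \<le> (\<Sum>z\<in>Z. p)" using W_card[OF p] unfolding W_def P_def by (intro sum_mono) auto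
    also have "\<dots> = nat (2*h-1) * p" unfolding Z_def by simp
    finally have "real (card WW) \<le> real (nat (2*h-1) * p)" by (simp only: of_nat_le_iff)
    moreover have "Cb \<ge> 0" unfolding Cb_def using C by simp
    ultimately show ?thesis by (rule mult_right_mono)
  qed
  also have "\<dots> = real_of_int (2*h - 1) * real p * (C * real (p^2) powr \<delta>)"
    using h unfolding Cb_def by simp
  finally show ?thesis unfolding S1_def by (simp add: card_cartesian_product power2_eq_square)
qed

theorem theorem9:
  shows "\<forall>\<epsilon>>0. \<exists>P::nat. \<forall>p::nat. \<forall>k h::int.
           prime p \<and> p \<ge> P \<and> h \<ge> 1 \<longrightarrow>
           real (U_count p k h) \<le> sqrt (real_of_int h) * real p powr (1/2 + \<epsilon>)"
proof (intro allI impI)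
  fix \<epsilon> :: real assume e: "\<epsilon> > 0"
  define \<delta> where "\<delta> = \<epsilon>/2"
  have d: "\<delta> > 0" using e by (simp add: \<delta>_def)
  obtain C where C: "C \<ge> 1" and DB: "\<forall>n::nat. n > 0 \<longrightarrow> real (card {d. d dvd n}) \<le> C * real n powr \<delta>"
    using divisor_bound[OF d] by blast
  define A where "A = sqrt (2*C)"
  have C0: "C \<ge> 0" using C by simp
  have A0: "A \<ge> 0" unfolding A_def using C by simp
  have A2: "A^2 = 2*C" unfolding A_def using C by (simp add: real_sqrt_pow2)
  define P0 where "P0 = nat \<lceil>(A+1) powr (2/\<epsilon>)\<rceil> + 2"
  show "\<exists>P::nat. \<forall>p::nat. \<forall>k h::int.
           prime p \<and> p \<ge> P \<and> h \<ge> 1 \<longrightarrow>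
           real (U_count p k h) \<le> sqrt (real_of_int h) * real p powr (1/2 + \<epsilon>)"
  proof (intro exI[of _ P0] allI impI, elim conjE)
    fix p :: nat and k h :: int
    assume p: "prime p" and pP: "P0 \<le> p" and h: "h \<ge> 1"
    define S1 where "S1 = {u \<in> {1..<int p}. \<exists>z. k + 1 \<le> z \<and> z \<le> k + h \<and> [fermat_quotient p u = z] (mod int p)}"
    define S where "S = {u \<in> {0..<int p}. \<exists>z. k + 1 \<le> z \<and> z \<le> k + h \<and> [fermat_quotient p u = z] (mod int p)}"
    have p2: "p \<ge> 2" using p prime_ge_2_nat by simp
    have rp: "real p > 0" using p2 by simp
    define x where "x = real p powr (\<epsilon>/2)"
    have x0: "x > 0" unfolding x_def using rp by simp
    have x2: "x^2 = real p powr \<epsilon>" unfolding x_def using rp by (simp add: powr_power)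
    have xA: "x \<ge> A + 1"
    proof -
      have "(A+1) powr (2/\<epsilon>) \<le> real p" using pP unfolding P0_def by linarith
      hence "((A+1) powr (2/\<epsilon>)) powr (\<epsilon>/2) \<le> real p powr (\<epsilon>/2)" using e by (intro powr_mono2) auto
      thus ?thesis unfolding x_def using e A0 by (simp add: powr_powr)
    qed
    have "S \<subseteq> insert 0 S1" unfolding S_def S1_def by auto
    moreover have finS1: "finite S1" unfolding S1_def by (rule finite_subset[of _ "{1..<int p}"]) auto
    ultimately have "card S \<le> card (insert 0 S1)" by (intro card_mono) auto
    also have "\<dots> \<le> card S1 + 1" using finS1 by (simp add: card_insert_if)
    finally have cS: "real (card S) \<le> real (card S1) + 1" by simp
    have pc: "real (card S1)^2 \<le> real_of_int (2*h - 1) * real p * (C * real (p^2) powr \<delta>)"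
      unfolding S1_def by (rule pair_count[OF p h C0 d DB])
    have pp: "real (p^2) powr \<delta> = real p powr \<epsilon>"
    proof -
      have e2: "real (p^2) = real p powr 2" using rp by (simp add: powr_numeral)
      have "real (p^2) powr \<delta> = real p powr (2 * \<delta>)" by (subst e2) (rule powr_powr)
      thus ?thesis by (simp add: \<delta>_def)
    qed
    define y where "y = sqrt (real_of_int h) * sqrt (real p)"
    have y1: "y \<ge> 1"
    proof -
      have "sqrt (real_of_int h) \<ge> 1" "sqrt (real p) \<ge> 1" using h p2 by auto
      thus ?thesis unfolding y_def using mult_mono[of 1 "sqrt (real_of_int h)" 1 "sqrt (real p)"] by simp
    qed
    have "real (card S1)^2 \<le> (y * A * x)^2"
    proof -
      have "real (card S1)^2 \<le> real_of_int (2*h - 1) * real p * (C * real p powr \<epsilon>)" using pc pp by simp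
      also have "\<dots> \<le> real_of_int (2*h) * real p * (C * real p powr \<epsilon>)"
        using C rp by (intro mult_right_mono) auto
      also have "\<dots> = (y * A * x)^2"
        unfolding y_def power_mult_distrib A2 x2 using h by simp
      finally show ?thesis .
    qed
    moreover have "0 \<le> y * A * x" using y1 A0 x0 by simp
    ultimately have s: "real (card S1) \<le> y * A * x" by (rule power2_le_imp_le)
    have "y * A * x + 1 \<le> y * x^2"
    proof -
      have yx0: "0 \<le> y * x" using y1 x0 by simp
      have "y * x * (A+1) \<le> y * x * x" by (rule mult_left_mono[OF xA yx0])
      moreover have "y * x \<ge> 1"
      proof -
        have "x \<ge> 1" using xA A0 by linarith
        thus ?thesis using y1 mult_mono[of 1 y 1 x] by simp
      qed
      moreover have "y*x*(A+1) = y*A*x + y*x" by (simp add: algebra_simps)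
      moreover have "y*x^2 = y*x*x" by (simp add: power2_eq_square)
      ultimately show ?thesis by linarith
    qed
    moreover have "sqrt (real_of_int h) * real p powr (1/2 + \<epsilon>) = y * x^2"
      unfolding y_def x2 using rp by (simp add: powr_add powr_half_sqrt)
    moreover have "U_count p k h = card S" unfolding U_count_def S_def by simp
    ultimately show "real (U_count p k h) \<le> sqrt (real_of_int h) * real p powr (1/2 + \<epsilon>)"
      using cS s by linarith
  qed
qed

end
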